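(* Let $K\subset\mathbb H^n$ be a bounded domain with smooth boundary, let $\hat K=\pi(K)\subset\mathbb R^n$ and $\widehat{\partial K}=\pi(\partial K)$, and let $V=\cosh d(\cdot,N)$, $N=(1,0)$, so $V(X)=\sqrt{1+|x|^2}$ at $X=(\sqrt{1+|x|^2},x)$. Then, identifying $K$ with $\hat K$ and $\partial K$ with $\widehat{\partial K}$ via $\pi$, and using at a point $x\in\widehat{\partial K}$ coordinates with $\hat g_{ij}=\delta_{ij}$ at $x$: (i) $V\, d\mathrm{vol}=d\widehat{\mathrm{vol}}$; (ii) $dA=\left(\frac{1+\hat{u}^2}{1+|x|^2}\right)^{1/2}d\hat{A}$; (iii) $V h_{ij}-V_{,\nu}\, g_{ij}=\left(\frac{1+|x|^2}{1+\hat{u}^2}\right)^{1/2}\hat{h}_{ij}$; (iv) $H_{n-1}(\tilde\kappa)=\left(\frac{1+|x|^2}{1+\hat{u}^2}\right)^{\frac{n+1}{2}}H_{n-1}(\hat{\kappa})$.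
   Context: Hyperboloid model: $\mathbb R^{n,1}$ is $\mathbb R^{n+1}$ with $\langle X,Y\rangle=-x_0y_0+\sum_{i=1}^n x_iy_i$, $\mathbb H^n=\{X=(x_0,x):\langle X,X\rangle=-1,\ x_0>0\}$; $d$ is the hyperbolic distance. $\pi:\mathbb H^n\to\mathbb R^n$, $(\sqrt{1+|x|^2},x)\mapsto x$. $d\mathrm{vol}$, $dA$ are the hyperbolic volume element and area element of $\partial K$; $d\widehat{\mathrm{vol}}$, $d\hat A$ the Euclidean volume element and area element of $\widehat{\partial K}$. For $\partial K$: $g_{ij}$ induced metric, $\nu$ unit outward normal, $h_{ij}$ second fundamental form, $\kappa_i$ principal curvatures, $V_{,\nu}$ the normal derivative of $V$, $\tilde\kappa_i=V\kappa_i-V_{,\nu}$ and $H_{n-1}(\tilde\kappa)=\prod_{i=1}^{n-1}\tilde\kappa_i$. For $\widehat{\partial K}\subset\mathbb R^n$: $\hat\nu$ Euclidean unit outward normal, $\hat u=x\cdot\hat\nu$ support function, $\hat h_{ij}$ second fundamental form, $\hat\kappa_i$ principal curvatures, $H_{n-1}(\hat\kappa)=\prod_i\hat\kappa_i$ the Gauss curvature. *)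

theory Defs
  imports "HOL-Analysis.Analysis"
begin

definition mink :: "real \<times> (real^'n) \<Rightarrow> real \<times> (real^'n) \<Rightarrow> real" where
  "mink X Y = - fst X * fst Y + snd X \<bullet> snd Y"

definition hyperboloid :: "(real \<times> (real^'n)) set" where
  "hyperboloid = {X. mink X X = -1 \<and> fst X > 0}"

definition hdist :: "real \<times> (real^'n) \<Rightarrow> real \<times> (real^'n) \<Rightarrow> real" where
  "hdist X Y = arcosh (- mink X Y)"

definition Npt :: "real \<times> (real^'n)" where
  "Npt = (1, 0)"

definition Vh :: "real \<times> (real^'n) \<Rightarrow> real" where
  "Vh X = cosh (hdist X Npt)"

definition proj :: "real \<times> (real^'n) \<Rightarrow> real^'n" where
  "proj X = snd X"

definition lift :: "real^'n \<Rightarrow> real \<times> (real^'n)" where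
  "lift x = (sqrt (1 + (norm x)\<^sup>2), x)"

text \<open>C-infinity: differentiable, and all directional derivatives are again C-infinity.\<close>
coinductive smooth_on :: "'a::real_normed_vector set \<Rightarrow> ('a \<Rightarrow> 'b::real_normed_vector) \<Rightarrow> bool"
  where "f differentiable_on S \<Longrightarrow> (\<And>v. smooth_on S (\<lambda>x. frechet_derivative f (at x) v))
         \<Longrightarrow> smooth_on S f"

definition pd :: "(real^'k \<Rightarrow> 'b::real_normed_vector) \<Rightarrow> 'k \<Rightarrow> real^'k \<Rightarrow> 'b" where
  "pd f i u = frechet_derivative f (at u) (axis i 1)"

definition pd2 :: "(real^'k \<Rightarrow> 'b::real_normed_vector) \<Rightarrow> 'k \<Rightarrow> 'k \<Rightarrow> real^'k \<Rightarrow> 'b" where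
  "pd2 f i j u = pd (\<lambda>v. pd f j v) i u"

definition smooth_bounded_domain :: "(real^'n) set \<Rightarrow> bool" where
  "smooth_bounded_domain S \<longleftrightarrow> open S \<and> connected S \<and> bounded S \<and> S \<noteq> {} \<and>
     (\<forall>p\<in>frontier S. \<exists>W \<rho>. open W \<and> p \<in> W \<and> smooth_on W (\<rho> :: real^'n \<Rightarrow> real) \<and>
        (\<forall>y\<in>W. frechet_derivative \<rho> (at y) \<noteq> (\<lambda>_. 0)) \<and>
        S \<inter> W = {y\<in>W. \<rho> y < 0})"

text \<open>A bounded domain with smooth boundary in H^n, using pi as global chart
  (pi is a diffeomorphism H^n -> R^n, and K is bounded iff pi(K) is bounded).\<close>
definition hyp_smooth_bounded_domain :: "(real \<times> (real^'n)) set \<Rightarrow> bool" where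
  "hyp_smooth_bounded_domain K \<longleftrightarrow> K \<subseteq> hyperboloid \<and> smooth_bounded_domain (proj ` K)"

definition outward :: "(real^'n) set \<Rightarrow> real^'n \<Rightarrow> real^'n \<Rightarrow> bool" where
  "outward S p w \<longleftrightarrow> (\<exists>\<epsilon>>0. \<forall>t. 0 < t \<and> t < \<epsilon> \<longrightarrow> p + t *\<^sub>R w \<notin> S \<and> p - t *\<^sub>R w \<in> S)"

text \<open>A tangent vector nu of H^n at X points out of K iff d pi (nu) = snd nu points out of pi(K).\<close>
definition hyp_outward :: "(real \<times> (real^'n)) set \<Rightarrow> real \<times> (real^'n) \<Rightarrow> real \<times> (real^'n) \<Rightarrow> bool" where
  "hyp_outward K X \<nu> \<longleftrightarrow> outward (proj ` K) (proj X) (snd \<nu>)"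

text \<open>Hyperbolic volume density in the coordinates x = pi(X): dvol = sqrt(det G) dx.\<close>
definition hyp_metric_coords :: "real^'n \<Rightarrow> real^'n^'n" where
  "hyp_metric_coords x = (\<chi> i j. mink (pd lift i x) (pd lift j x))"

definition hyp_vol_density :: "real^'n \<Rightarrow> real" where
  "hyp_vol_density x = sqrt (det (hyp_metric_coords x))"

text \<open>Induced metrics and second fundamental forms for a parametrisation phi of the
  Euclidean hypersurface, and its lift X = pi^{-1} o phi into H^n.\<close>
definition ghat :: "(real^'m \<Rightarrow> real^'n) \<Rightarrow> real^'m \<Rightarrow> real^'m^'m" where
  "ghat \<phi> u = (\<chi> i j. pd \<phi> i u \<bullet> pd \<phi> j u)"

definition hhat :: "(real^'m \<Rightarrow> real^'n) \<Rightarrow> real^'n \<Rightarrow> real^'m \<Rightarrow> real^'m^'m" where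
  "hhat \<phi> \<nu> u = (\<chi> i j. - (pd2 \<phi> i j u \<bullet> \<nu>))"

definition ghyp :: "(real^'m \<Rightarrow> real^'n) \<Rightarrow> real^'m \<Rightarrow> real^'m^'m" where
  "ghyp \<phi> u = (\<chi> i j. mink (pd (lift \<circ> \<phi>) i u) (pd (lift \<circ> \<phi>) j u))"

text \<open>Second fundamental form of the lifted hypersurface in H^n (Gauss formula:
  h_ij = <nabla_i nu, d_j X> = - <D_i D_j X, nu>, D the flat connection of R^{n,1}).\<close>
definition hhyp :: "(real^'m \<Rightarrow> real^'n) \<Rightarrow> real \<times> (real^'n) \<Rightarrow> real^'m \<Rightarrow> real^'m^'m" where
  "hhyp \<phi> \<nu> u = (\<chi> i j. - mink (pd2 (lift \<circ> \<phi>) i j u) \<nu>)"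

text \<open>Normal derivative of V at X in direction nu (along the geodesic t -> cosh t X + sinh t nu).\<close>
definition V_normal :: "real \<times> (real^'n) \<Rightarrow> real \<times> (real^'n) \<Rightarrow> real" where
  "V_normal X \<nu> = vector_derivative (\<lambda>t. Vh (cosh t *\<^sub>R X + sinh t *\<^sub>R \<nu>)) (at 0)"

text \<open>Gauss-Kronecker curvature: product of principal curvatures = det of the shape
  operator g^{-1} h (principal curvatures are the eigenvalues of the shape operator).\<close>
definition gauss_kronecker :: "real^'m^'m \<Rightarrow> real^'m^'m \<Rightarrow> real" where
  "gauss_kronecker g h = det (matrix_inv g ** h)"

end

theory Submission
  imports Defs
begin

definition r1 :: "real \<Rightarrow> real^'k \<Rightarrow> real^'k^'k" where
  "r1 c a = (\<chi> i j. (if i = j then 1 else 0) - c * (a$i * a$j))"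

lemma r1_mulv: "r1 c a *v z = z - (c * (a \<bullet> z)) *\<^sub>R a"
proof -
  have "(r1 c a *v z) $ i = (z - (c * (a \<bullet> z)) *\<^sub>R a) $ i" for i
  proof -
    have "(r1 c a *v z) $ i = (\<Sum>j\<in>UNIV. (if i = j then z$j else 0) - c * a$i * (a$j * z$j))"
      by (auto simp: r1_def matrix_vector_mult_def algebra_simps intro!: sum.cong)
    also have "\<dots> = z$i - c * a$i * (a \<bullet> z)"
      by (simp add: sum_subtractf sum_distrib_left[symmetric] inner_vec_def)
    finally show ?thesis by simp
  qed
  then show ?thesis by (simp add: vec_eq_iff)
qed

lemma transpose_dot: "(transpose A *v y) \<bullet> (a::real^'k) = y \<bullet> (A *v a)"
proof -
  have "(transpose A *v y) \<bullet> a = (\<Sum>i\<in>UNIV. \<Sum>j\<in>UNIV. A$j$i * y$j * a$i)"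
    by (simp add: inner_vec_def matrix_vector_mult_def transpose_def sum_distrib_right)
  also have "\<dots> = (\<Sum>j\<in>UNIV. \<Sum>i\<in>UNIV. A$j$i * y$j * a$i)" by (rule sum.swap)
  also have "\<dots> = y \<bullet> (A *v a)"
    by (simp add: inner_vec_def matrix_vector_mult_def sum_distrib_left mult_ac)
  finally show ?thesis .
qed

lemma det_r1: "det (r1 c (a::real^'k)) = 1 - c * (a \<bullet> a)"
proof -
  obtain k0 :: 'k where True by simp
  obtain f where f: "orthogonal_transformation f" "f a = norm a *\<^sub>R axis k0 (1::real)"
    using orthogonal_transformation_exists[of a "norm a *\<^sub>R axis k0 (1::real)"] by auto
  define Q where "Q = matrix f"
  have oQ: "orthogonal_matrix Q" using f(1) orthogonal_transformation_matrix Q_def by blast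
  have lf: "linear f" using f(1) orthogonal_transformation_linear by blast
  have Qa: "Q *v a = norm a *\<^sub>R axis k0 (1::real)" using f lf Q_def by (simp add: matrix_vector_mul(2))
  have QQ: "Q ** transpose Q = mat 1" using oQ orthogonal_matrix_def by blast
  have eq: "Q ** r1 c a ** transpose Q = r1 c (Q *v a)"
  proof (subst matrix_eq, intro allI)
    fix y
    have "(Q ** r1 c a ** transpose Q) *v y = Q *v (r1 c a *v (transpose Q *v y))"
      by (simp only: matrix_vector_mul_assoc matrix_mul_assoc)
    also have "\<dots> = Q *v (transpose Q *v y) - (c * (a \<bullet> (transpose Q *v y))) *\<^sub>R (Q *v a)"
      by (simp del: transpose_matrix_vector add: r1_mulv matrix_vector_mult_diff_distrib matrix_vector_mult_scaleR)
    also have "\<dots> = y - (c * (y \<bullet> (Q *v a))) *\<^sub>R (Q *v a)"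
      by (simp del: transpose_matrix_vector add: matrix_vector_mul_assoc QQ inner_commute[of a] transpose_dot)
    finally show "(Q ** r1 c a ** transpose Q) *v y = r1 c (Q *v a) *v y"
      by (simp add: r1_mulv inner_commute[of "Q *v a" y])
  qed
  have dQ: "det Q * det Q = 1" using det_orthogonal_matrix[OF oQ] by auto
  have "det (Q ** r1 c a ** transpose Q) = det Q * det (r1 c a) * det Q"
    by (simp add: det_mul)
  also have "\<dots> = (det Q * det Q) * det (r1 c a)" by (simp only: mult_ac)
  finally have "det (r1 c a) = det (Q ** r1 c a ** transpose Q)" using dQ by simp
  also have "\<dots> = det (r1 c (norm a *\<^sub>R axis k0 (1::real)))" using eq Qa by simp
  also have "\<dots> = (\<Prod>i\<in>UNIV. if i = k0 then 1 - c * (a \<bullet> a) else 1)"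
  proof -
    define b where "b = norm a *\<^sub>R axis k0 (1::real)"
    have b: "b $ i = (if i = k0 then norm a else 0)" for i by (simp add: b_def axis_def)
    have na: "norm a * norm a = a \<bullet> a" by (simp add: power2_norm_eq_inner[symmetric] power2_eq_square)
    have "det (r1 c b) = (\<Prod>i\<in>UNIV. r1 c b $ i $ i)"
      by (rule det_diagonal) (auto simp: r1_def b)
    also have "\<dots> = (\<Prod>i\<in>UNIV. if i = k0 then 1 - c * (a \<bullet> a) else 1)"
      by (rule prod.cong) (simp_all add: r1_def b na)
    finally show ?thesis unfolding b_def .
  qed
  also have "\<dots> = 1 - c * (a \<bullet> a)" by (simp add: prod.delta)
  finally show ?thesis .
qed

definition RR :: "real^'n \<Rightarrow> real" where "RR y = sqrt (1 + y \<bullet> y)"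

lemma RR_pos: "RR y > 0" by (simp add: RR_def add_pos_nonneg)
lemma RR_sq: "(RR y)^2 = 1 + y \<bullet> y" by (simp add: RR_def add_nonneg_nonneg)

lemma lift_eq: "lift y = (RR y, y)" by (simp add: lift_def RR_def power2_norm_eq_inner)

lemma RR_deriv: "(RR has_derivative (\<lambda>v. (y \<bullet> v) / RR y)) (at y)"
proof -
  have d0: "((\<lambda>y. y \<bullet> y + 1) has_derivative (\<lambda>v. y \<bullet> v + v \<bullet> y)) (at y)"
    by (rule has_derivative_add_const[OF has_derivative_inner[OF has_derivative_ident has_derivative_ident]])
  have d1: "((\<lambda>y. 1 + y \<bullet> y) has_derivative (\<lambda>v. y \<bullet> v + v \<bullet> y)) (at y)"
    using d0 by (simp only: add.commute[where b=1])
  have "1 + y \<bullet> y > 0" by (simp add: add_pos_nonneg)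
  then have d2: "(sqrt has_derivative (\<lambda>t. (inverse (sqrt (1 + y \<bullet> y)) / 2) * t)) (at (1 + y \<bullet> y))"
    using DERIV_real_sqrt has_field_derivative_imp_has_derivative by blast
  have "((\<lambda>y. sqrt (1 + y \<bullet> y)) has_derivative (\<lambda>v. (inverse (sqrt (1 + y \<bullet> y)) / 2) * (y \<bullet> v + v \<bullet> y))) (at y)"
    using has_derivative_compose[OF d1 d2] by (simp add: o_def)
  moreover have "(\<lambda>v. (inverse (sqrt (1 + y \<bullet> y)) / 2) * (y \<bullet> v + v \<bullet> y)) = (\<lambda>v. (y \<bullet> v) / RR y)"
  proof
    fix v
    have e: "y \<bullet> v + v \<bullet> y = 2 * (y \<bullet> v)" using inner_commute[of v y] by linarith
    show "(inverse (sqrt (1 + y \<bullet> y)) / 2) * (y \<bullet> v + v \<bullet> y) = y \<bullet> v / RR y"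
      unfolding e by (simp add: RR_def field_simps)
  qed
  ultimately show ?thesis unfolding RR_def[abs_def] by simp
qed

lemma lift_deriv: "(lift has_derivative (\<lambda>v. ((y \<bullet> v) / RR y, v))) (at y)"
  unfolding lift_eq[abs_def]
  by (auto intro!: derivative_eq_intros RR_deriv)

lemma pd_lift: "pd lift i y = (y $ i / RR y, axis i 1)"
  unfolding pd_def frechet_derivative_at[OF lift_deriv, symmetric]
  by (simp add: inner_axis)

lemma mink_simp: "mink (a, v) (b, w) = - a * b + v \<bullet> w" by (simp add: mink_def)

lemma Vh_eq: assumes "fst X \<ge> 1" shows "Vh X = fst X"
  using assms by (simp add: Vh_def hdist_def mink_def Npt_def)

lemma part1: "Vh (lift y) * hyp_vol_density y = 1"
proof -
  have "hyp_metric_coords y = r1 (1 / (RR y)^2) y"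
    by (simp add: hyp_metric_coords_def r1_def pd_lift mink_simp vec_eq_iff inner_axis_axis power2_eq_square)
  then have "det (hyp_metric_coords y) = 1 - (y \<bullet> y) / (RR y)^2" by (simp add: det_r1)
  also have "\<dots> = 1 / (RR y)^2"
  proof -
    have "1 + y \<bullet> y > 0" by (simp add: add_pos_nonneg)
    then have "1 - y \<bullet> y / (1 + y \<bullet> y) = 1 / (1 + y \<bullet> y)"
      by (simp add: field_simps)
    then show ?thesis unfolding RR_sq .
  qed
  finally have "hyp_vol_density y = 1 / RR y"
    using RR_pos[of y] by (simp add: hyp_vol_density_def real_sqrt_divide)
  moreover have "Vh (lift y) = RR y"
  proof -
    have "1 \<le> RR y" unfolding RR_def by simp
    then show ?thesis by (simp add: Vh_eq lift_eq)
  qed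
  ultimately show ?thesis using RR_pos[of y] by simp
qed
lemma det_matrix_inv:
  fixes G :: "real^'k^'k"
  assumes "det G \<noteq> 0"
  shows "det (matrix_inv G) = 1 / det G"
proof -
  have "invertible G" using assms invertible_det_nz by blast
  then have "\<exists>A'. G ** A' = mat 1 \<and> A' ** G = mat 1" unfolding invertible_def by blast
  then have "G ** matrix_inv G = mat 1" unfolding matrix_inv_def by (rule someI_ex[THEN conjunct1])
  then have "det G * det (matrix_inv G) = 1" by (metis det_I det_mul)
  then show ?thesis using assms by (simp add: field_simps)
qed

lemma det_scaleR_mat:
  fixes H :: "real^'k^'k"
  shows "det (c *\<^sub>R H) = c ^ CARD('k) * det H"
proof -
  have "c *\<^sub>R H = (\<chi> i. c *s H$i)" by (simp add: vec_eq_iff)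
  then have "det (c *\<^sub>R H) = prod (\<lambda>i. c) (UNIV::'k set) * det ((\<chi> i. H$i)::real^'k^'k)"
    by (simp add: det_rows_mul)
  then show ?thesis by simp
qed

lemma sign_lemma:
  fixes \<rho> :: "real^'n \<Rightarrow> real"
  assumes W: "open W" "p \<in> W" and S: "S \<inter> W = {y\<in>W. \<rho> y < 0}"
    and d: "(\<rho> has_derivative L) (at p)" and out: "outward S p w"
  shows "L w \<ge> 0"
proof (rule ccontr)
  assume "\<not> L w \<ge> 0" hence neg: "L w < 0" by simp
  define g where "g t = \<rho> (p + t *\<^sub>R w)" for t
  have lin: "linear L" using d has_derivative_linear by blast
  have dg: "DERIV g 0 :> L w"
  proof -
    have "((\<lambda>t. p + t *\<^sub>R w) has_derivative (\<lambda>t. t *\<^sub>R w)) (at 0)"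
      by (auto intro!: derivative_eq_intros)
    then have "(g has_derivative (\<lambda>t. L (t *\<^sub>R w))) (at 0)"
      unfolding g_def using has_derivative_compose[of "\<lambda>t. p + t *\<^sub>R w" _ 0 UNIV \<rho> L] d by simp
    moreover have "L (t *\<^sub>R w) = t * L w" for t using lin by (simp add: linear_scale)
    ultimately have "(g has_derivative (\<lambda>t. t * L w)) (at 0)" by simp
    moreover have "(\<lambda>t. t * L w) = (*) (L w)" by (auto simp: fun_eq_iff)
    ultimately show ?thesis by (simp add: has_field_derivative_def)
  qed
  obtain d1 where d1: "d1>0" "\<forall>h>0. h<d1 \<longrightarrow> g 0 < g (0 - h)" using DERIV_neg_dec_left[OF dg neg] by auto
  obtain d2 where d2: "d2>0" "\<forall>h>0. h<d2 \<longrightarrow> g 0 > g (0 + h)" using DERIV_neg_dec_right[OF dg neg] by auto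
  obtain \<epsilon> where eps: "\<epsilon>>0" "\<forall>t. 0<t \<and> t<\<epsilon> \<longrightarrow> p + t *\<^sub>R w \<notin> S \<and> p - t *\<^sub>R w \<in> S"
    using out unfolding outward_def by blast
  obtain \<delta> where del: "\<delta>>0" "ball p \<delta> \<subseteq> W" using W open_contains_ball by blast
  define h where "h = min (min d1 d2) (min \<epsilon> (\<delta> / (norm w + 1))) / 2"
  have np: "norm w + 1 > 0" by (simp add: add_nonneg_pos)
  define m where "m = min (min d1 d2) (min \<epsilon> (\<delta> / (norm w + 1)))"
  have m: "m > 0" "m \<le> d1" "m \<le> d2" "m \<le> \<epsilon>" "m \<le> \<delta> / (norm w + 1)"
    unfolding m_def using d1(1) d2(1) eps(1) del(1) np by simp_all
  have hm: "h = m / 2" unfolding h_def m_def by simp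
  have h: "h > 0" "h < d1" "h < d2" "h < \<epsilon>" "h < \<delta> / (norm w + 1)"
    using m unfolding hm by linarith+
  have "h * (norm w + 1) < \<delta>" using h(5) np by (simp add: pos_less_divide_eq)
  then have hw: "norm (h *\<^sub>R w) < \<delta>" using h(1) by (simp add: algebra_simps)
  have "dist p (p + h *\<^sub>R w) < \<delta>" "dist p (p - h *\<^sub>R w) < \<delta>" using hw by (simp_all add: dist_norm)
  then have inW: "p + h *\<^sub>R w \<in> W" "p - h *\<^sub>R w \<in> W" using del(2) unfolding ball_def by blast+
  have "g h \<ge> 0"
  proof (rule ccontr)
    assume "\<not> g h \<ge> 0"
    then have "p + h *\<^sub>R w \<in> {y\<in>W. \<rho> y < 0}" using inW(1) by (simp add: g_def)
    then have "p + h *\<^sub>R w \<in> S" using S by blast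
    then show False using eps(2) h(1,4) by blast
  qed
  moreover have "g (-h) < 0"
  proof -
    have "p - h *\<^sub>R w \<in> S" using eps(2) h(1,4) by blast
    then have "p - h *\<^sub>R w \<in> {y\<in>W. \<rho> y < 0}" using S inW(2) by blast
    then show ?thesis by (simp add: g_def)
  qed
  moreover have "g 0 < g (- h)" using d1(2) h(1,2) by (metis diff_0)
  moreover have "g h < g 0" using d2(2) h(1,3) by (metis add_0)
  ultimately show False by linarith
qed
theorem lemma2p2:
  fixes K :: "(real \<times> (real^'n)) set"
    and U :: "(real^'m) set"
    and \<phi> :: "real^'m \<Rightarrow> real^'n"
    and u0 :: "real^'m"
    and \<nu>hat :: "real^'n"
    and \<nu> :: "real \<times> (real^'n)"
  assumes dimn: "CARD('n) = CARD('m) + 1"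
    and K: "hyp_smooth_bounded_domain K"
    and U: "open U" "u0 \<in> U"
    and chart: "smooth_on U \<phi>" "inj_on \<phi> U"
      "\<forall>u\<in>U. inj (frechet_derivative \<phi> (at u))"
      "\<phi> ` U \<subseteq> frontier (proj ` K)"
    and nuhat: "norm \<nu>hat = 1" "\<forall>i. \<nu>hat \<bullet> pd \<phi> i u0 = 0"
      "outward (proj ` K) (\<phi> u0) \<nu>hat"
    and nu: "mink \<nu> \<nu> = 1" "mink \<nu> (lift (\<phi> u0)) = 0"
      "\<forall>i. mink \<nu> (pd (lift \<circ> \<phi>) i u0) = 0"
      "hyp_outward K (lift (\<phi> u0)) \<nu>"
    and normal_coords: "ghat \<phi> u0 = mat 1"
  shows
    "(\<forall>x\<in>proj ` K. Vh (lift x) * hyp_vol_density x = 1)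
     \<and> sqrt (det (ghyp \<phi> u0)) =
         sqrt ((1 + (\<phi> u0 \<bullet> \<nu>hat)\<^sup>2) / (1 + (norm (\<phi> u0))\<^sup>2)) * sqrt (det (ghat \<phi> u0))
     \<and> Vh (lift (\<phi> u0)) *\<^sub>R hhyp \<phi> \<nu> u0 - V_normal (lift (\<phi> u0)) \<nu> *\<^sub>R ghyp \<phi> u0 =
         sqrt ((1 + (norm (\<phi> u0))\<^sup>2) / (1 + (\<phi> u0 \<bullet> \<nu>hat)\<^sup>2)) *\<^sub>R hhat \<phi> \<nu>hat u0
     \<and> gauss_kronecker (ghyp \<phi> u0)
         (Vh (lift (\<phi> u0)) *\<^sub>R hhyp \<phi> \<nu> u0 - V_normal (lift (\<phi> u0)) \<nu> *\<^sub>R ghyp \<phi> u0) =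
       ((1 + (norm (\<phi> u0))\<^sup>2) / (1 + (\<phi> u0 \<bullet> \<nu>hat)\<^sup>2)) powr ((real CARD('n) + 1) / 2)
         * gauss_kronecker (ghat \<phi> u0) (hhat \<phi> \<nu>hat u0)"
proof -
  define x where "x = \<phi> u0"
  define r where "r = RR x"
  define e where "e i = pd \<phi> i u0" for i
  define a where "a = (\<chi> i. x \<bullet> e i)"
  define uh where "uh = x \<bullet> \<nu>hat"
  obtain \<nu>0 \<nu>' where nuv: "\<nu> = (\<nu>0, \<nu>')" by (cases \<nu>)
  have rpos: "r > 0" unfolding r_def by (rule RR_pos)
  have rsq: "r^2 = 1 + x \<bullet> x" unfolding r_def by (rule RR_sq)
  have nx: "(norm x)^2 = x \<bullet> x" by (simp add: power2_norm_eq_inner)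
  have sm: "\<phi> differentiable_on U" "\<And>v. smooth_on U (\<lambda>x. frechet_derivative \<phi> (at x) v)"
    using chart(1) by (auto elim: smooth_on.cases)
  have phid: "\<phi> differentiable (at u)" if "u \<in> U" for u
    using sm(1) U(1) that differentiable_on_eq_differentiable_at by blast
  have pdd: "(\<lambda>v. pd \<phi> j v) differentiable (at u0)" for j
  proof -
    have "(\<lambda>x. frechet_derivative \<phi> (at x) (axis j 1)) differentiable_on U"
      using sm(2)[of "axis j 1"] by (auto elim: smooth_on.cases)
    then show ?thesis unfolding pd_def using U differentiable_on_eq_differentiable_at by blast
  qed
  have ee: "e i \<bullet> e j = (if i = j then 1 else 0)" for i j
  proof -
    have "ghat \<phi> u0 $ i $ j = mat 1 $ i $ j" using normal_coords by simp
    then show ?thesis by (simp add: ghat_def mat_def e_def)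
  qed
  have ne: "\<nu>hat \<bullet> e i = 0" for i using nuhat(2) e_def by simp
  have nn: "\<nu>hat \<bullet> \<nu>hat = 1" using nuhat(1) by (simp add: norm_eq_1)
  have zero: "z = 0" if z: "\<And>i. z \<bullet> e i = 0" "z \<bullet> \<nu>hat = 0" for z
  proof -
    define B where "B = insert \<nu>hat (range e)"
    have inje: "inj e"
    proof (rule injI)
      fix i j assume "e i = e j"
      then have "e i \<bullet> e j = 1" using ee[of i i] by simp
      then show "i = j" using ee[of i j] by (auto split: if_splits)
    qed
    have notin: "\<nu>hat \<notin> range e"
    proof
      assume "\<nu>hat \<in> range e"
      then obtain i where "\<nu>hat = e i" by blast
      then show False using ne[of i] nn by simp
    qed
    have cB: "card B = CARD('n)"
      using notin inje dimn by (simp add: B_def card_image)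
    have po: "pairwise orthogonal B"
      unfolding pairwise_def orthogonal_def B_def
      using ee ne by (auto simp: inner_commute)
    have en0: "e i \<noteq> 0" for i using ee[of i i] by auto
    have "\<nu>hat \<noteq> 0" using nn by auto
    then have n0: "0 \<notin> B" using en0 unfolding B_def by auto
    have ind: "independent B" by (rule pairwise_orthogonal_independent[OF po n0])
    have "UNIV \<subseteq> span B"
      by (rule card_ge_dim_independent[OF _ ind]) (simp_all add: cB)
    then have "z \<in> span B" by blast
    moreover have "orthogonal z y" if "y \<in> B" for y
      using that z unfolding B_def orthogonal_def by auto
    ultimately have "orthogonal z z" using orthogonal_to_span by blast
    then show ?thesis by (simp add: orthogonal_self)
  qed
  have decomp: "v = (v \<bullet> \<nu>hat) *\<^sub>R \<nu>hat + (\<Sum>i\<in>UNIV. (v \<bullet> e i) *\<^sub>R e i)" for v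
  proof -
    define z where "z = v - (v \<bullet> \<nu>hat) *\<^sub>R \<nu>hat - (\<Sum>i\<in>UNIV. (v \<bullet> e i) *\<^sub>R e i)"
    have "z \<bullet> e j = 0" for j
    proof -
      have "(\<Sum>i\<in>UNIV. (v \<bullet> e i) *\<^sub>R e i) \<bullet> e j = (\<Sum>i\<in>UNIV. (v \<bullet> e i) * (e i \<bullet> e j))"
        by (simp add: inner_sum_left)
      also have "\<dots> = (\<Sum>i\<in>UNIV. if i = j then v \<bullet> e i else 0)"
        by (rule sum.cong) (simp_all add: ee)
      also have "\<dots> = v \<bullet> e j" by simp
      finally show ?thesis unfolding z_def by (simp add: inner_diff_left ne)
    qed
    moreover have "z \<bullet> \<nu>hat = 0"
    proof -
      have "(\<Sum>i\<in>UNIV. (v \<bullet> e i) *\<^sub>R e i) \<bullet> \<nu>hat = (\<Sum>i\<in>UNIV. (v \<bullet> e i) * (e i \<bullet> \<nu>hat))"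
        by (simp add: inner_sum_left)
      also have "\<dots> = 0" using ne by (simp add: inner_commute)
      finally show ?thesis unfolding z_def by (simp add: inner_diff_left nn)
    qed
    ultimately have "z = 0" using zero by blast
    then show ?thesis unfolding z_def by (simp add: algebra_simps)
  qed
  have dL: "((lift \<circ> \<phi>) has_derivative (\<lambda>v. ((\<phi> u \<bullet> frechet_derivative \<phi> (at u) v) / RR (\<phi> u), frechet_derivative \<phi> (at u) v))) (at u)"
    if "u \<in> U" for u
  proof -
    have "(\<phi> has_derivative frechet_derivative \<phi> (at u)) (at u)"
      using phid[OF that] frechet_derivative_works by blast
    from has_derivative_compose[OF this lift_deriv[of "\<phi> u"]] show ?thesis by (simp add: o_def)
  qed
  have pdL: "pd (lift \<circ> \<phi>) j u = ((\<phi> u \<bullet> pd \<phi> j u) / RR (\<phi> u), pd \<phi> j u)" if "u \<in> U" for u j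
    unfolding pd_def frechet_derivative_at[OF dL[OF that], symmetric] by simp
  have pd2L: "pd2 (lift \<circ> \<phi>) i j u0 = ((e i \<bullet> e j + x \<bullet> pd2 \<phi> i j u0) / r - a$i * a$j / r^3, pd2 \<phi> i j u0)" for i j
  proof -
    define D\<phi> where "D\<phi> = frechet_derivative \<phi> (at u0)"
    define DP where "DP = frechet_derivative (\<lambda>v. pd \<phi> j v) (at u0)"
    have dphi: "(\<phi> has_derivative D\<phi>) (at u0)"
      unfolding D\<phi>_def using phid[OF U(2)] frechet_derivative_works by blast
    have dP: "((\<lambda>v. pd \<phi> j v) has_derivative DP) (at u0)"
      unfolding DP_def using pdd[of j] frechet_derivative_works by blast
    have dRR: "((\<lambda>v. RR (\<phi> v)) has_derivative (\<lambda>h. (x \<bullet> D\<phi> h) / r)) (at u0)"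
      using has_derivative_compose[OF dphi RR_deriv[of "\<phi> u0"]] unfolding x_def r_def by simp
    have dN: "((\<lambda>v. \<phi> v \<bullet> pd \<phi> j v) has_derivative (\<lambda>h. \<phi> u0 \<bullet> DP h + D\<phi> h \<bullet> pd \<phi> j u0)) (at u0)"
      by (rule has_derivative_inner[OF dphi dP])
    have rr: "RR (\<phi> u0) \<noteq> 0" using RR_pos by (metis less_irrefl)
    have dF: "((\<lambda>v. (\<phi> v \<bullet> pd \<phi> j v) / RR (\<phi> v)) has_derivative
       (\<lambda>h. - (\<phi> u0 \<bullet> pd \<phi> j u0) * (inverse (RR (\<phi> u0)) * ((x \<bullet> D\<phi> h) / r) * inverse (RR (\<phi> u0)))
            + (\<phi> u0 \<bullet> DP h + D\<phi> h \<bullet> pd \<phi> j u0) / RR (\<phi> u0))) (at u0)"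
      by (rule has_derivative_divide[OF dN dRR rr])
    have dG: "((\<lambda>v. ((\<phi> v \<bullet> pd \<phi> j v) / RR (\<phi> v), pd \<phi> j v)) has_derivative
       (\<lambda>h. (- (\<phi> u0 \<bullet> pd \<phi> j u0) * (inverse (RR (\<phi> u0)) * ((x \<bullet> D\<phi> h) / r) * inverse (RR (\<phi> u0)))
            + (\<phi> u0 \<bullet> DP h + D\<phi> h \<bullet> pd \<phi> j u0) / RR (\<phi> u0), DP h))) (at u0)"
      by (rule has_derivative_Pair[OF dF dP])
    have dH: "((\<lambda>v. pd (lift \<circ> \<phi>) j v) has_derivative
       (\<lambda>h. (- (\<phi> u0 \<bullet> pd \<phi> j u0) * (inverse (RR (\<phi> u0)) * ((x \<bullet> D\<phi> h) / r) * inverse (RR (\<phi> u0)))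
            + (\<phi> u0 \<bullet> DP h + D\<phi> h \<bullet> pd \<phi> j u0) / RR (\<phi> u0), DP h))) (at u0)"
      by (rule has_derivative_transform_within_open[OF dG U]) (simp add: pdL)
    have e1: "D\<phi> (axis i 1) = e i" unfolding D\<phi>_def e_def pd_def by simp
    have e2: "DP (axis i 1) = pd2 \<phi> i j u0" unfolding DP_def pd2_def pd_def by simp
    have e3: "frechet_derivative (pd \<phi> j) (at u0) (axis i 1) = pd2 \<phi> i j u0"
      unfolding pd2_def pd_def by simp
    have "pd2 (lift \<circ> \<phi>) i j u0 =
       (- (x \<bullet> e j) * (inverse r * ((x \<bullet> e i) / r) * inverse r)
            + (x \<bullet> pd2 \<phi> i j u0 + e i \<bullet> e j) / r, pd2 \<phi> i j u0)"
      unfolding pd2_def pd_def[of _ i] frechet_derivative_at[OF dH, symmetric]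
      by (simp add: e1 e2 e3 x_def r_def e_def)
    also have "\<dots> = ((e i \<bullet> e j + x \<bullet> pd2 \<phi> i j u0) / r - a$i * a$j / r^3, pd2 \<phi> i j u0)"
      using rpos by (simp add: a_def field_simps power3_eq_cube)
    finally show ?thesis .
  qed
  have pdL0: "pd (lift \<circ> \<phi>) j u0 = ((x \<bullet> e j) / r, e j)" for j
    using pdL[OF U(2)] by (simp add: x_def e_def r_def)
  have ghyp: "ghyp \<phi> u0 = r1 (1 / r^2) a"
    by (simp add: ghyp_def r1_def vec_eq_iff pdL0 mink_simp ee a_def power2_eq_square)
  have xh: "x \<bullet> ((x \<bullet> \<nu>hat) *\<^sub>R \<nu>hat + (\<Sum>i\<in>UNIV. (x \<bullet> e i) *\<^sub>R e i)) = uh^2 + a \<bullet> a"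
  proof -
    have aa: "a \<bullet> a = (\<Sum>i\<in>UNIV. (x \<bullet> e i) * (x \<bullet> e i))" by (simp add: a_def inner_vec_def)
    show ?thesis by (simp add: inner_add_right inner_sum_right uh_def aa power2_eq_square)
  qed
  have xx: "x \<bullet> x = uh^2 + a \<bullet> a"
    using arg_cong[OF decomp[of x], of "\<lambda>t. x \<bullet> t"] xh by simp
  have dg: "det (ghyp \<phi> u0) = (1 + uh^2) / r^2"
  proof -
    have "det (ghyp \<phi> u0) = 1 - (a \<bullet> a) / r^2" by (simp add: ghyp det_r1)
    also have "\<dots> = (r^2 - a \<bullet> a) / r^2" using rpos by (simp add: field_simps)
    also have "r^2 - a \<bullet> a = 1 + uh^2" using rsq xx by simp
    finally show ?thesis .
  qed
  have dghat: "det (ghat \<phi> u0) = 1" using normal_coords by simp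
  have r1: "r \<ge> 1" unfolding r_def RR_def by simp
  have liftx: "lift x = (r, x)" by (simp add: lift_eq r_def)
  have Vx: "Vh (lift x) = r" using r1 by (simp add: liftx Vh_eq)
  have m1: "- \<nu>0 * r + \<nu>' \<bullet> x = 0" using nu(2) by (simp add: nuv x_def[symmetric] liftx mink_simp inner_commute)
  have m2: "- \<nu>0 * \<nu>0 + \<nu>' \<bullet> \<nu>' = 1" using nu(1) by (simp add: nuv mink_simp)
  have Vn: "V_normal (lift x) \<nu> = \<nu>0"
  proof -
    define F where "F t = cosh t * r + sinh t * \<nu>0" for t
    define N where "N t = cosh t *\<^sub>R x + sinh t *\<^sub>R \<nu>'" for t
    have Y: "cosh t *\<^sub>R lift x + sinh t *\<^sub>R \<nu> = (F t, N t)" for t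
      by (simp add: liftx nuv F_def N_def)
    have FN: "(F t)^2 = 1 + N t \<bullet> N t" for t
    proof -
      have NN: "N t \<bullet> N t = (cosh t)^2 * (x \<bullet> x) + 2 * cosh t * sinh t * (\<nu>' \<bullet> x) + (sinh t)^2 * (\<nu>' \<bullet> \<nu>')"
        using inner_commute[of x \<nu>'] by (simp add: N_def inner_add_left inner_add_right power2_eq_square algebra_simps)
      have FF: "(F t)^2 = (cosh t)^2 * r^2 + 2 * cosh t * sinh t * (\<nu>0 * r) + (sinh t)^2 * \<nu>0^2"
        by (simp add: F_def power2_eq_square algebra_simps)
      have cs: "(cosh t)^2 = (sinh t)^2 + 1" by (rule cosh_square_eq)
      have q1: "\<nu>' \<bullet> x = \<nu>0 * r" using m1 by linarith
      have q2: "\<nu>' \<bullet> \<nu>' = 1 + \<nu>0 * \<nu>0" using m2 by linarith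
      have q3: "x \<bullet> x = r^2 - 1" using rsq by linarith
      have NN': "N t \<bullet> N t = ((sinh t)^2 + 1) * (r^2 - 1) + 2 * cosh t * sinh t * (\<nu>0 * r) + (sinh t)^2 * (1 + \<nu>0 * \<nu>0)"
        using NN unfolding q1 q2 q3 cs .
      show ?thesis unfolding NN' FF cs by (simp add: algebra_simps power2_eq_square)
    qed
    define T where "T = {t. 0 < F t}"
    have oT: "open T" unfolding T_def F_def
      by (rule open_Collect_less) (auto intro!: continuous_intros)
    have T0: "0 \<in> T" using rpos by (simp add: T_def F_def)
    have VF: "Vh (cosh t *\<^sub>R lift x + sinh t *\<^sub>R \<nu>) = F t" if "t \<in> T" for t
    proof -
      have Fp: "F t > 0" using that T_def by simp
      have F2: "(F t)^2 \<ge> 1" using FN[of t] by simp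
      have "F t \<ge> 1"
      proof (rule ccontr)
        assume "\<not> F t \<ge> 1"
        then have "F t * F t < 1 * 1" using Fp by (intro mult_strict_mono) auto
        then show False using F2 by (simp add: power2_eq_square)
      qed
      then show ?thesis by (simp add: Y Vh_eq)
    qed
    have dF: "(F has_real_derivative \<nu>0) (at 0)"
    proof -
      have "(F has_real_derivative (sinh 0 * r + cosh 0 * \<nu>0)) (at 0)"
        unfolding F_def[abs_def] by (auto intro!: derivative_eq_intros)
      then show ?thesis by simp
    qed
    then have "(F has_vector_derivative \<nu>0) (at 0)"
      by (simp add: has_real_derivative_iff_has_vector_derivative)
    then have "((\<lambda>t. Vh (cosh t *\<^sub>R lift x + sinh t *\<^sub>R \<nu>)) has_vector_derivative \<nu>0) (at 0)"
      by (rule has_vector_derivative_transform_within_open[OF _ oT T0]) (simp add: VF)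
    then show ?thesis unfolding V_normal_def by (rule vector_derivative_at)
  qed
  define k where "k = \<nu>0 / r"
  define \<beta> where "\<beta> = (\<nu>' - k *\<^sub>R x) \<bullet> \<nu>hat"
  have n0: "\<nu>0 = k * r" using rpos by (simp add: k_def)
  have ve: "\<nu>' \<bullet> e i = k * (x \<bullet> e i)" for i
  proof -
    have "- \<nu>0 * ((x \<bullet> e i) / r) + \<nu>' \<bullet> e i = 0"
      using nu(3) by (simp add: pdL0 nuv mink_simp)
    then show ?thesis using rpos by (simp add: k_def field_simps)
  qed
  have nu'eq: "\<nu>' = \<beta> *\<^sub>R \<nu>hat + k *\<^sub>R x"
  proof -
    have "(\<nu>' - k *\<^sub>R x) \<bullet> e i = 0" for i by (simp add: inner_diff_left ve)
    then have "\<nu>' - k *\<^sub>R x = \<beta> *\<^sub>R \<nu>hat"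
      using decomp[of "\<nu>' - k *\<^sub>R x"] unfolding \<beta>_def by simp
    then show ?thesis by (simp add: algebra_simps)
  qed
  have vx: "\<nu>' \<bullet> x = \<beta> * uh + k * (x \<bullet> x)"
    by (subst nu'eq) (simp add: inner_add_left uh_def inner_commute[of \<nu>hat x])
  have rr: "r * r = 1 + x \<bullet> x" using rsq by (simp add: power2_eq_square)
  have kb: "k = \<beta> * uh"
  proof -
    have "\<nu>0 * r = k + k * (x \<bullet> x)" by (simp add: n0 mult.assoc rr algebra_simps)
    then show ?thesis using m1 vx by linarith
  qed
  have vv: "\<nu>' \<bullet> \<nu>' = \<beta> * \<beta> + 2 * \<beta> * k * uh + k * k * (x \<bullet> x)"
  proof -
    have "\<nu>' \<bullet> \<nu>' = (\<beta> *\<^sub>R \<nu>hat + k *\<^sub>R x) \<bullet> (\<beta> *\<^sub>R \<nu>hat + k *\<^sub>R x)"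
      using nu'eq by simp
    also have "\<dots> = \<beta> * \<beta> * (\<nu>hat \<bullet> \<nu>hat) + 2 * \<beta> * k * (x \<bullet> \<nu>hat) + k * k * (x \<bullet> x)"
      using inner_commute[of \<nu>hat x] by (simp add: inner_add_left inner_add_right algebra_simps)
    finally show ?thesis by (simp add: nn uh_def)
  qed
  have b2: "\<beta>^2 * (1 + uh^2) = 1"
  proof -
    have "\<nu>0 * \<nu>0 = k * k + k * k * (x \<bullet> x)"
      by (simp add: n0 algebra_simps) (metis rr distrib_left mult.assoc mult.commute mult.left_commute mult_1_right)
    then have "\<beta> * \<beta> + 2 * \<beta> * k * uh - k * k = 1" using m2 vv by linarith
    then show ?thesis unfolding kb by (simp add: algebra_simps power2_eq_square)
  qed
  have bpos: "\<beta> > 0"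
  proof -
    define S where "S = proj ` K"
    have sbd: "smooth_bounded_domain S" using K unfolding hyp_smooth_bounded_domain_def S_def by blast
    have xF: "x \<in> frontier S" using chart(4) U(2) unfolding x_def S_def by blast
    obtain W \<rho> where W: "open W" "x \<in> W" and s\<rho>: "smooth_on W (\<rho> :: real^'n \<Rightarrow> real)"
        and nz: "\<forall>y\<in>W. frechet_derivative \<rho> (at y) \<noteq> (\<lambda>_. 0)" and SW: "S \<inter> W = {y\<in>W. \<rho> y < 0}"
      using sbd xF unfolding smooth_bounded_domain_def by blast
    have oS: "open S" using sbd unfolding smooth_bounded_domain_def by blast
    have \<rho>d: "\<rho> differentiable (at y)" if "y \<in> W" for y
    proof -
      have "\<rho> differentiable_on W" using s\<rho> by (auto elim: smooth_on.cases)
      then show ?thesis using W(1) that differentiable_on_eq_differentiable_at by blast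
    qed
    define L where "L = frechet_derivative \<rho> (at x)"
    have d\<rho>: "(\<rho> has_derivative L) (at x)" unfolding L_def using \<rho>d[OF W(2)] frechet_derivative_works by blast
    have linL: "linear L" using d\<rho> has_derivative_linear by blast
    have Lnz: "L \<noteq> (\<lambda>_. 0)" unfolding L_def using nz W(2) by simp
    have Ln: "L \<nu>hat \<ge> 0"
      by (rule sign_lemma[OF W SW d\<rho>]) (use nuhat(3) in \<open>simp add: S_def x_def\<close>)
    have Lv: "L \<nu>' \<ge> 0"
      by (rule sign_lemma[OF W SW d\<rho>])
        (use nu(4)[folded x_def] in \<open>simp add: hyp_outward_def S_def nuv proj_def liftx\<close>)
    have rx: "\<rho> x \<le> 0"
    proof (rule ccontr)
      assume "\<not> \<rho> x \<le> 0" hence pos: "\<rho> x > 0" by simp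
      have "continuous (at x) \<rho>" using \<rho>d[OF W(2)] differentiable_imp_continuous_within by blast
      then obtain \<delta> where \<delta>: "\<delta> > 0" "\<forall>y. dist y x < \<delta> \<longrightarrow> dist (\<rho> y) (\<rho> x) < \<rho> x"
        using pos unfolding continuous_at_eps_delta by blast
      obtain \<delta>2 where \<delta>2: "\<delta>2 > 0" "ball x \<delta>2 \<subseteq> W" using W open_contains_ball by blast
      obtain \<epsilon> where \<epsilon>: "\<epsilon> > 0" "\<forall>t. 0<t \<and> t<\<epsilon> \<longrightarrow> x + t *\<^sub>R \<nu>hat \<notin> S \<and> x - t *\<^sub>R \<nu>hat \<in> S"
        using nuhat(3) unfolding outward_def x_def[symmetric] S_def[symmetric] by blast
      define m where "m = min \<epsilon> (min \<delta> \<delta>2)"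
      have m: "m > 0" "m \<le> \<epsilon>" "m \<le> \<delta>" "m \<le> \<delta>2" unfolding m_def using \<epsilon>(1) \<delta>(1) \<delta>2(1) by simp_all
      define t where "t = m / 2"
      have t: "t > 0" "t < \<epsilon>" "t < \<delta>" "t < \<delta>2" using m unfolding t_def by linarith+
      have yS: "x - t *\<^sub>R \<nu>hat \<in> S" using \<epsilon>(2) t(1,2) by blast
      have dy: "dist (x - t *\<^sub>R \<nu>hat) x = t" "dist x (x - t *\<^sub>R \<nu>hat) = t"
        using nuhat(1) t(1) by (simp_all add: dist_norm)
      have "x - t *\<^sub>R \<nu>hat \<in> W" using \<delta>2(2) dy(2) t(4) unfolding ball_def by auto
      then have neg: "\<rho> (x - t *\<^sub>R \<nu>hat) < 0" using yS SW by blast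
      have "dist (\<rho> (x - t *\<^sub>R \<nu>hat)) (\<rho> x) < \<rho> x" using \<delta>(2) dy(1) t(3) by simp
      then show False using neg pos by (simp add: dist_real_def)
    qed
    define D\<phi> where "D\<phi> = frechet_derivative \<phi> (at u0)"
    have dphi: "(\<phi> has_derivative D\<phi>) (at u0)"
      unfolding D\<phi>_def using phid[OF U(2)] frechet_derivative_works by blast
    have dcomp: "((\<lambda>y. \<rho> (\<phi> y)) has_derivative (\<lambda>h. L (D\<phi> h))) (at u0)"
      using has_derivative_compose[OF dphi, of \<rho> L] d\<rho> unfolding x_def by blast
    have evW: "eventually (\<lambda>y. \<phi> y \<in> W) (at u0)"
    proof -
      have "continuous (at u0) \<phi>" using phid[OF U(2)] differentiable_imp_continuous_within by blast
      then have "(\<phi> \<longlongrightarrow> x) (at u0)" unfolding x_def continuous_at by simp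
      then show ?thesis by (rule topological_tendstoD[OF _ W(1) W(2)])
    qed
    have evU: "eventually (\<lambda>y. y \<in> U) (at u0)" using eventually_at_in_open'[OF U] .
    have evmin: "eventually (\<lambda>y. \<rho> (\<phi> u0) \<le> \<rho> (\<phi> y)) (at u0)"
    proof -
      have "\<rho> (\<phi> u0) \<le> \<rho> (\<phi> y)" if "y \<in> U \<and> \<phi> y \<in> W" for y
      proof -
        have "\<phi> y \<in> frontier S" using chart(4) that S_def by blast
        then have "\<phi> y \<notin> S" using oS by (simp add: frontier_def interior_open)
        then have "\<not> \<rho> (\<phi> y) < 0" using SW that by blast
        then show ?thesis using rx x_def by simp
      qed
      then show ?thesis by (rule eventually_mono[OF eventually_conj[OF evU evW]])
    qed
    have z: "(\<lambda>h. L (D\<phi> h)) = (\<lambda>h. 0)" by (rule has_derivative_local_min[OF dcomp evmin])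
    have Le: "L (e i) = 0" for i
    proof -
      have "L (D\<phi> (axis i 1)) = 0" using fun_cong[OF z, of "axis i 1"] by simp
      then show ?thesis unfolding D\<phi>_def e_def pd_def .
    qed
    have Lform: "L v = (v \<bullet> \<nu>hat) * L \<nu>hat" for v
    proof -
      have "L v = L ((v \<bullet> \<nu>hat) *\<^sub>R \<nu>hat + (\<Sum>i\<in>UNIV. (v \<bullet> e i) *\<^sub>R e i))"
        using arg_cong[OF decomp[of v], of L] .
      also have "\<dots> = (v \<bullet> \<nu>hat) * L \<nu>hat + (\<Sum>i\<in>UNIV. (v \<bullet> e i) * L (e i))"
        using linL by (simp add: linear_add linear_scale linear_sum)
      also have "\<dots> = (v \<bullet> \<nu>hat) * L \<nu>hat" by (simp add: Le)
      finally show ?thesis .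
    qed
    have "L \<nu>hat \<noteq> 0"
    proof
      assume "L \<nu>hat = 0"
      then have "L = (\<lambda>_. 0)"
      proof -
        assume L0: "L \<nu>hat = 0"
        show ?thesis
        proof
          fix v show "L v = 0" using Lform[of v] L0 by simp
        qed
      qed
      then show False using Lnz by blast
    qed
    then have Lp: "L \<nu>hat > 0" using Ln by simp
    have "(\<nu>' \<bullet> \<nu>hat) * L \<nu>hat \<ge> 0" using Lv Lform[of \<nu>'] by simp
    then have vn: "\<nu>' \<bullet> \<nu>hat \<ge> 0" using Lp by (simp add: zero_le_mult_iff)
    have "\<nu>' \<bullet> \<nu>hat = \<beta> * (1 + uh^2)"
    proof -
      have "\<nu>' \<bullet> \<nu>hat = \<beta> + k * uh"
        by (subst nu'eq) (simp add: inner_add_left nn uh_def)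
      then show ?thesis by (simp add: kb algebra_simps power2_eq_square)
    qed
    moreover have u1: "1 + uh^2 > 0" by (simp add: add_pos_nonneg)
    ultimately have "\<beta> * (1 + uh^2) \<ge> 0" using vn by simp
    then have "\<beta> \<ge> 0" using u1 by (simp add: zero_le_mult_iff)
    moreover have "\<beta> \<noteq> 0" using b2 by auto
    ultimately show ?thesis by simp
  qed
  have c: "sqrt ((1 + (norm x)^2) / (1 + uh^2)) = r * \<beta>"
  proof -
    have u1: "1 + uh^2 > 0" by (simp add: add_pos_nonneg)
    have e: "(r*\<beta>)^2 * (1+uh^2) = 1 + (norm x)^2"
    proof -
      have "(r*\<beta>)^2*(1+uh^2) = r^2 * (\<beta>^2*(1+uh^2))" by (simp add: power_mult_distrib)
      also have "\<dots> = r^2" using b2 by simp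
      also have "\<dots> = 1 + (norm x)^2" using rsq nx by simp
      finally show ?thesis .
    qed
    have "(1 + (norm x)^2) / (1 + uh^2) = (r * \<beta>)^2"
      using u1 e by (auto simp: divide_eq_eq)
    then show ?thesis using rpos bpos by simp
  qed
  have P1: "\<forall>y\<in>proj ` K. Vh (lift y) * hyp_vol_density y = 1" using part1 by blast
  have P2: "sqrt (det (ghyp \<phi> u0)) =
         sqrt ((1 + (\<phi> u0 \<bullet> \<nu>hat)\<^sup>2) / (1 + (norm (\<phi> u0))\<^sup>2)) * sqrt (det (ghat \<phi> u0))"
    unfolding x_def[symmetric] uh_def[symmetric] dg dghat by (simp add: nx rsq)
  have ent: "r * hhyp \<phi> \<nu> u0 $ i $ j - \<nu>0 * ghyp \<phi> u0 $ i $ j = (r * \<beta>) * hhat \<phi> \<nu>hat u0 $ i $ j" for i j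
  proof -
    define X where "X = pd2 \<phi> i j u0"
    define d where "d = (if i = j then 1 else 0 :: real)"
    have xv: "X \<bullet> \<nu>' = \<beta> * (X \<bullet> \<nu>hat) + k * (x \<bullet> X)"
      by (subst nu'eq) (simp add: inner_add_right inner_commute[of X x])
    have h1: "hhyp \<phi> \<nu> u0 $ i $ j = ((d + x \<bullet> X) / r - a$i * a$j / r^3) * \<nu>0 - (\<beta> * (X \<bullet> \<nu>hat) + k * (x \<bullet> X))"
      by (simp add: hhyp_def pd2L nuv mink_simp ee X_def[symmetric] d_def xv) (simp add: algebra_simps)
    have h2: "ghyp \<phi> u0 $ i $ j = d - a$i * a$j / r^2"
      by (simp add: ghyp r1_def d_def)
    have h3: "hhat \<phi> \<nu>hat u0 $ i $ j = - (X \<bullet> \<nu>hat)"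
      by (simp add: hhat_def X_def)
    show ?thesis unfolding h1 h2 h3 n0 using rpos
      by (simp add: field_simps power3_eq_cube power2_eq_square)
  qed
  have P3: "Vh (lift (\<phi> u0)) *\<^sub>R hhyp \<phi> \<nu> u0 - V_normal (lift (\<phi> u0)) \<nu> *\<^sub>R ghyp \<phi> u0 =
         sqrt ((1 + (norm (\<phi> u0))\<^sup>2) / (1 + (\<phi> u0 \<bullet> \<nu>hat)\<^sup>2)) *\<^sub>R hhat \<phi> \<nu>hat u0"
    unfolding x_def[symmetric] uh_def[symmetric] Vx Vn c
    by (simp add: vec_eq_iff ent)
  have P4: "gauss_kronecker (ghyp \<phi> u0)
         (Vh (lift (\<phi> u0)) *\<^sub>R hhyp \<phi> \<nu> u0 - V_normal (lift (\<phi> u0)) \<nu> *\<^sub>R ghyp \<phi> u0) =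
       ((1 + (norm (\<phi> u0))\<^sup>2) / (1 + (\<phi> u0 \<bullet> \<nu>hat)\<^sup>2)) powr ((real CARD('n) + 1) / 2)
         * gauss_kronecker (ghat \<phi> u0) (hhat \<phi> \<nu>hat u0)"
  proof -
    define H where "H = hhat \<phi> \<nu>hat u0"
    define q where "q = r * \<beta>"
    have qpos: "q > 0" using rpos bpos by (simp add: q_def)
    have u1: "1 + uh^2 > 0" by (simp add: add_pos_nonneg)
    have q2: "q^2 = (1 + (norm x)\<^sup>2) / (1 + uh\<^sup>2)"
    proof -
      have "0 \<le> (1 + (norm x)\<^sup>2) / (1 + uh\<^sup>2)" by simp
      then show ?thesis using c unfolding q_def by (metis real_sqrt_pow2)
    qed
    have dgq: "det (ghyp \<phi> u0) = 1 / q^2"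
      unfolding q2 dg using rsq nx by simp
    have L: "gauss_kronecker (ghyp \<phi> u0) (q *\<^sub>R H) = q^2 * q ^ CARD('m) * det H"
      unfolding gauss_kronecker_def det_mul det_scaleR_mat
      using qpos by (simp add: det_matrix_inv dgq)
    have R: "gauss_kronecker (ghat \<phi> u0) H = det H"
      unfolding gauss_kronecker_def det_mul normal_coords by (simp add: det_matrix_inv)
    have pw: "((1 + (norm x)\<^sup>2) / (1 + uh\<^sup>2)) powr ((real CARD('n) + 1) / 2) = q^2 * q ^ CARD('m)"
    proof -
      have "(1 + (norm x)\<^sup>2) / (1 + uh\<^sup>2) = q^2" using q2 by simp
      then have "((1 + (norm x)\<^sup>2) / (1 + uh\<^sup>2)) powr ((real CARD('n) + 1) / 2) = (q powr 2) powr ((real CARD('m) + 2) / 2)"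
      proof -
        have qq: "q^2 = q powr 2" using qpos by (simp add: powr_numeral)
        have ex: "(real CARD('n) + 1) / 2 = (real CARD('m) + 2) / 2" using dimn by simp
        show ?thesis unfolding \<open>(1 + (norm x)\<^sup>2) / (1 + uh\<^sup>2) = q^2\<close> qq ex ..
      qed
      also have "\<dots> = q powr (2 * ((real CARD('m) + 2) / 2))" by (rule powr_powr)
      also have "\<dots> = q powr (real (CARD('m) + 2))"
      proof -
        have "2 * ((real CARD('m) + 2) / 2) = real (CARD('m) + 2)" by simp
        then show ?thesis by (simp only:)
      qed
      also have "\<dots> = q ^ (CARD('m) + 2)" using qpos by (rule powr_realpow)
      finally show ?thesis by (simp add: power_add mult_ac power2_eq_square)
    qed
    have "Vh (lift x) *\<^sub>R hhyp \<phi> \<nu> u0 - V_normal (lift x) \<nu> *\<^sub>R ghyp \<phi> u0 = q *\<^sub>R H"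
      using P3 unfolding x_def[symmetric] uh_def[symmetric] c H_def q_def .
    then show ?thesis unfolding x_def[symmetric] uh_def[symmetric] H_def[symmetric] using L R pw by simp
  qed
  show ?thesis using P1 P2 P3 P4 by blast
qed

end
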